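(* For all real $x\ge2$, $x^{-2}+x^{-2/x}<1$. *)

theory Defs
  imports Complex_Main
begin

end

theory Submission
  imports Defs
begin

theorem mainTheorem14:
  fixes x :: real
  assumes "x \<ge> 2"
  shows "x powr (-2) + x powr (-2 / x) < 1"
proof -
  have xp: "x > 0" using assms by simp
  have "exp (- ln x) \<ge> 1 + (- ln x)" by (rule exp_ge_add_one_self)
  hence "1 / x \<ge> 1 - ln x" using xp by (simp add: exp_minus divide_inverse)
  moreover have "1 / x \<le> 1/2" using assms by simp
  ultimately have lnx: "ln x \<ge> 1/2" by linarith
  define u where "u = 1 / (x^2 - 1)"
  have xx: "x * x \<ge> 2 * x" using assms xp by (simp add: mult_right_mono)
  have x21: "x^2 - 1 > x" using assms xx unfolding power2_eq_square by linarith
  have up: "u > 0" using x21 xp unfolding u_def by simp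
  have "2 * ln x * (x^2 - 1) \<ge> x^2 - 1" using lnx x21 xp
    using mult_right_mono[of 1 "2 * ln x" "x^2 - 1"] by simp
  hence "2 * ln x * (x^2 - 1) > x" using x21 by linarith
  hence "2 * ln x / x > u" unfolding u_def using xp x21
    by (simp add: field_simps)
  hence "x powr (-2 / x) < exp (- u)" using xp
    by (simp add: powr_def)
  also have "exp (- u) \<le> 1 / (1 + u)"
  proof -
    have "exp u \<ge> 1 + u" by (rule exp_ge_add_one_self)
    thus ?thesis using up by (simp add: exp_minus field_simps)
  qed
  also have "1 / (1 + u) = 1 - 1 / x^2" unfolding u_def using x21 xp
    by (simp add: field_simps)
  finally have "x powr (-2 / x) < 1 - 1 / x^2" .
  moreover have "x powr (-2) = 1 / x^2" using xp
    by (simp add: powr_minus powr_realpow divide_inverse)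
  ultimately show ?thesis by simp
qed

end
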